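(* Let $\mathcal{A}$ be an Ershov $\mathcal{C}$-algebra. If $\mathcal{A}$ is weakly equationally Noetherian, then for every set of constants $\{c_j \mid j \in J\} \subseteq \mathcal{C}$ that is not bounded above, there exists $c \in \mathcal{C}$ such that the system of equations in one variable $x$ $$\{ x \wedge c_j = 0 \mid j \in J\}$$ is equivalent over $\mathcal{A}$ to the equation $x \leq c$.
   Context: An Ershov algebra is a structure $\langle A; \vee, \wedge, \setminus, 0\rangle$ such that $\langle A;\vee,\wedge\rangle$ is a distributive lattice with least element $0$, and $b \setminus a$ is the relative complement: the unique $z$ with $z \wedge a = 0$ and $z \vee a = a \vee b$. An Ershov $\mathcal{C}$-algebra is an Ershov algebra $\mathcal{A}$ together with a distinguished subalgebra $\mathcal{C}$ whose elements are added as constant symbols; $\mathcal{L}$ is the language $\{\vee,\wedge,\setminus,0\}$ plus these constants. An equation is $t(\bar x)=s(\bar x)$ with $t,s$ terms of $\mathcal{L}$; $t\le s$ means the equation $t\vee s = s$. Two systems of equations are equivalent over $\mathcal{A}$ if they have the same solution set. $\mathcal{A}$ is weakly equationally Noetherian if every system of equations (possibly infinite) in finitely many variables is equivalent over $\mathcal{A}$ to some finite system of equations of $\mathcal{L}$. A set is upper-unbounded if it has no upper bound in $\mathcal{A}$. *)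

theory Defs
  imports Main
begin

text \<open>An Ershov algebra is modelled on a type of class distrib_lattice with least element
  bot (the constant 0) and an operation minus which is required to be the relative complement.\<close>

definition ershov_algebra :: "'a::{distrib_lattice, order_bot, minus} itself \<Rightarrow> bool" where
  "ershov_algebra _ \<longleftrightarrow>
     (\<forall>a b :: 'a. inf (b - a) a = bot \<and> sup (b - a) a = sup a b)"

definition ershov_subalgebra :: "'a::{distrib_lattice, order_bot, minus} set \<Rightarrow> bool" where
  "ershov_subalgebra C \<longleftrightarrow> bot \<in> C \<and>
     (\<forall>a\<in>C. \<forall>b\<in>C. sup a b \<in> C \<and> inf a b \<in> C \<and> a - b \<in> C)"

datatype 'a trm = Var nat | Cst 'a | Join "'a trm" "'a trm" | Meet "'a trm" "'a trm"
  | Diff "'a trm" "'a trm" | Zero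

primrec eval :: "(nat \<Rightarrow> 'a::{distrib_lattice, order_bot, minus}) \<Rightarrow> 'a trm \<Rightarrow> 'a" where
  "eval v (Var i) = v i"
| "eval v (Cst c) = c"
| "eval v (Join t s) = sup (eval v t) (eval v s)"
| "eval v (Meet t s) = inf (eval v t) (eval v s)"
| "eval v (Diff t s) = eval v t - eval v s"
| "eval v Zero = bot"

primrec vars :: "'a trm \<Rightarrow> nat set" where
  "vars (Var i) = {i}"
| "vars (Cst c) = {}"
| "vars (Join t s) = vars t \<union> vars s"
| "vars (Meet t s) = vars t \<union> vars s"
| "vars (Diff t s) = vars t \<union> vars s"
| "vars Zero = {}"

primrec csts :: "'a trm \<Rightarrow> 'a set" where
  "csts (Var i) = {}"
| "csts (Cst c) = {c}"
| "csts (Join t s) = csts t \<union> csts s"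
| "csts (Meet t s) = csts t \<union> csts s"
| "csts (Diff t s) = csts t \<union> csts s"
| "csts Zero = {}"

type_synonym 'a eqn = "'a trm \<times> 'a trm"

definition system_in :: "'a set \<Rightarrow> nat \<Rightarrow> 'a eqn set \<Rightarrow> bool" where
  "system_in C n S \<longleftrightarrow> (\<forall>(t, s)\<in>S. vars t \<union> vars s \<subseteq> {..<n} \<and> csts t \<union> csts s \<subseteq> C)"

definition sols :: "nat \<Rightarrow> 'a eqn set \<Rightarrow> (nat \<Rightarrow> 'a::{distrib_lattice, order_bot, minus}) set" where
  "sols n S = {v. (\<forall>i\<ge>n. v i = bot) \<and> (\<forall>(t, s)\<in>S. eval v t = eval v s)}"

definition equivalent :: "nat \<Rightarrow> ('a::{distrib_lattice, order_bot, minus}) eqn set \<Rightarrow> 'a eqn set \<Rightarrow> bool" where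
  "equivalent n S T \<longleftrightarrow> sols n S = sols n T"

definition weakly_eq_noetherian :: "'a::{distrib_lattice, order_bot, minus} set \<Rightarrow> bool" where
  "weakly_eq_noetherian C \<longleftrightarrow>
     (\<forall>n (S :: 'a eqn set). system_in C n S \<longrightarrow>
        (\<exists>S0. finite S0 \<and> system_in C n S0 \<and> equivalent n S S0))"

definition upper_unbounded :: "'a::order set \<Rightarrow> bool" where
  "upper_unbounded X \<longleftrightarrow> \<not> (\<exists>u. \<forall>x\<in>X. x \<le> u)"

end

theory Submission
  imports Defs
begin

locale ershov =
  fixes dummy :: "'a::{distrib_lattice, order_bot, minus} itself"
  assumes ax1: "inf (b - a) a = (bot::'a)"
    and ax2: "sup (b - a) a = sup a (b::'a)"
begin

lemma sup_bot_l[simp]: "sup bot (x::'a) = x" by (simp add: sup.absorb2)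
lemma sup_bot_r[simp]: "sup (x::'a) bot = x" by (simp add: sup.absorb1)
lemma inf_bot_l[simp]: "inf bot (x::'a) = bot" by (simp add: inf.absorb1)
lemma inf_bot_r[simp]: "inf (x::'a) bot = bot" by (simp add: inf.absorb2)

lemma uniq:
  fixes z a b :: 'a
  assumes "inf z a = bot" "sup z a = sup a b"
  shows "z = b - a"
proof -
  have "z = inf z (sup z a)" by simp
  also have "\<dots> = inf z (sup (b - a) a)" using assms ax2 by simp
  also have "\<dots> = inf z (b - a)" using assms by (simp add: inf_sup_distrib1)
  finally have 1: "z = inf z (b - a)" .
  have "b - a = inf (b - a) (sup (b - a) a)" by simp
  also have "\<dots> = inf (b - a) (sup z a)" using assms ax2 by simp
  also have "\<dots> = inf (b - a) z" using ax1 by (simp add: inf_sup_distrib1)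
  finally show ?thesis using 1 by (simp add: inf_commute)
qed

lemma diff_le: "(b::'a) - a \<le> b"
proof -
  have "b - a = inf (b - a) (sup (b - a) a)" by simp
  also have "\<dots> = inf (b - a) (sup a b)" using ax2 by simp
  also have "\<dots> = inf (b - a) b" using ax1 by (simp add: inf_sup_distrib1)
  finally show ?thesis by (metis inf.absorb_iff2 inf_commute)
qed

lemma le_diff_iff: "(y::'a) \<le> b - a \<longleftrightarrow> y \<le> b \<and> inf y a = bot"
proof
  assume h: "y \<le> b - a"
  have "inf y a \<le> inf (b - a) a" by (rule inf_mono[OF h order_refl])
  thus "y \<le> b \<and> inf y a = bot" using h diff_le ax1 by (metis bot_unique order_trans)
next
  assume h: "y \<le> b \<and> inf y a = bot"
  hence "y \<le> sup a b" by (simp add: le_supI2)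
  hence "y = inf y (sup (b - a) a)" using ax2 by (simp add: inf.absorb1)
  also have "\<dots> = inf y (b - a)" using h by (simp add: inf_sup_distrib1)
  finally show "y \<le> b - a" by (metis inf.cobounded2)
qed

lemma diff_le_iff: "(b::'a) - a \<le> y \<longleftrightarrow> b \<le> sup a y"
proof
  assume "b - a \<le> y"
  hence "sup (b - a) a \<le> sup a y" by (simp add: le_supI1 sup.coboundedI2)
  thus "b \<le> sup a y" using ax2 by simp
next
  assume h: "b \<le> sup a y"
  have "b - a = inf (b - a) (sup a y)" using h diff_le by (metis inf.absorb1 order_trans)
  also have "\<dots> = inf (b - a) y" using ax1 by (simp add: inf_sup_distrib1 inf_commute)
  finally show "b - a \<le> y" by (metis inf.cobounded2)
qed

lemma le_sup_diff: "b \<le> sup a (b - (a::'a))"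
  using ax2[of b a] by (metis sup.cobounded2 sup_commute)
lemma ax1': "inf a (b - a) = (bot::'a)" using ax1 by (simp add: inf_commute)

lemma sup_diff: "sup b1 b2 - a = sup (b1 - a) (b2 - (a::'a))"
proof (rule antisym)
  show "sup b1 b2 - a \<le> sup (b1 - a) (b2 - a)"
  proof -
    have "sup a (b1 - a) \<le> sup a (sup (b1 - a) (b2 - a))" by (rule sup_mono) simp_all
    hence 1: "b1 \<le> sup a (sup (b1 - a) (b2 - a))" using le_sup_diff[of b1 a] by (rule order_trans[rotated])
    have "sup a (b2 - a) \<le> sup a (sup (b1 - a) (b2 - a))" by (rule sup_mono) simp_all
    hence 2: "b2 \<le> sup a (sup (b1 - a) (b2 - a))" using le_sup_diff[of b2 a] by (rule order_trans[rotated])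
    show ?thesis unfolding diff_le_iff using 1 2 by simp
  qed
  show "sup (b1 - a) (b2 - a) \<le> sup b1 b2 - a"
    unfolding le_diff_iff
    by (simp add: inf_sup_distrib2 ax1 le_supI1 le_supI2 diff_le)
qed
lemma diff_sup: "b - sup a1 a2 = (b - a1) - (a2::'a)"
proof (rule antisym)
  show "b - sup a1 a2 \<le> (b - a1) - a2"
  proof -
    have h: "inf (b - sup a1 a2) (sup a1 a2) = bot" by (rule ax1)
    have "inf (b - sup a1 a2) a1 \<le> inf (b - sup a1 a2) (sup a1 a2)"
      by (simp add: inf.coboundedI2)
    hence 1: "inf (b - sup a1 a2) a1 = bot" using h by (simp add: bot_unique)
    have "inf (b - sup a1 a2) a2 \<le> inf (b - sup a1 a2) (sup a1 a2)"
      by (simp add: inf.coboundedI2)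
    hence 2: "inf (b - sup a1 a2) a2 = bot" using h by (simp add: bot_unique)
    show ?thesis unfolding le_diff_iff using diff_le 1 2 by blast
  qed
  show "(b - a1) - a2 \<le> b - sup a1 a2"
    unfolding le_diff_iff using diff_le ax1 le_diff_iff
    by (metis inf_sup_distrib1 order_trans sup_bot_l)
qed
lemma diff_bot[simp]: "b - bot = (b::'a)"
  by (metis ax2 sup_bot_l sup_bot_r)
lemma bot_diff[simp]: "bot - b = (bot::'a)"
  using diff_le by (metis bot.extremum_uniqueI)
lemma inf_diff: "inf b (c - a) = inf b c - (a::'a)"
proof (rule antisym)
  have 1: "inf b (c - a) \<le> inf b c" by (rule inf_mono[OF order_refl diff_le])
  have "inf (inf b (c - a)) a \<le> inf (c - a) a" by (rule inf_mono[OF inf_le2 order_refl])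
  hence 2: "inf (inf b (c - a)) a = bot" using ax1 by (simp add: bot_unique)
  show "inf b (c - a) \<le> inf b c - a" unfolding le_diff_iff using 1 2 by simp
  have 3: "inf b c - a \<le> b" using diff_le[of "inf b c" a] by (rule order_trans) simp
  have 5: "inf b c - a \<le> c" using diff_le[of "inf b c" a] by (rule order_trans) simp
  have 4: "inf b c - a \<le> c - a" unfolding le_diff_iff using 5 ax1[of "inf b c" a] by simp
  show "inf b c - a \<le> inf b (c - a)" using 3 4 by simp
qed

lemma diff_disj: "inf u a = bot \<Longrightarrow> u - a = (u::'a)"
  using uniq[of u a u] by (simp add: sup_commute)
lemma diff_anti: "a \<le> a' \<Longrightarrow> b - a' \<le> b - (a::'a)"
proof -
  assume h: "a \<le> a'"
  have "inf (b - a') a \<le> inf (b - a') a'" by (rule inf_mono[OF order_refl h])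
  hence "inf (b - a') a = bot" using ax1 by (simp add: bot_unique)
  thus ?thesis unfolding le_diff_iff using diff_le by simp
qed
lemma diff_mono: "b \<le> b' \<Longrightarrow> b - a \<le> b' - (a::'a)"
proof -
  assume h: "b \<le> b'"
  have "b - a \<le> b'" using diff_le[of b a] h by (rule order_trans)
  thus ?thesis unfolding le_diff_iff using ax1 by simp
qed
lemma diff_zero: "u \<le> a \<Longrightarrow> u - a = (bot::'a)"
proof -
  assume h: "u \<le> a"
  have "u - a \<le> bot" using diff_le_iff[of u a bot] h by simp
  thus ?thesis by (simp add: bot_unique)
qed
lemma split: "x = sup (inf x E) (x - (E::'a))"
proof -
  have "x = inf x (sup E (x - E))" using le_sup_diff by (simp add: inf.absorb1)
  also have "\<dots> = sup (inf x E) (x - E)" using diff_le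
    by (simp add: inf_sup_distrib1 inf.absorb2)
  finally show ?thesis .
qed
lemma diff_inf_self: "u - a = u - inf u (a::'a)"
proof -
  have "inf (u - a) (inf u a) = bot" using ax1
    by (metis inf.orderE inf_bot_r inf_left_commute)
  moreover have "sup (u - a) (inf u a) = sup (inf u a) u"
    using split[of u a] by (simp add: sup_commute sup.absorb2)
  ultimately show ?thesis by (rule uniq)
qed
lemma sub_diff: "u \<le> x \<Longrightarrow> u - (x - E) = inf u (E::'a)"
proof -
  assume ux: "u \<le> x"
  have "u - (x - E) = sup (inf u E - (x - E)) ((u - E) - (x - E))"
    using split[of u E] sup_diff by metis
  moreover have "inf u E - (x - E) = inf u E"
    by (rule diff_disj) (metis ax1' inf.absorb_iff2 inf_assoc inf_commute inf_bot_r)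
  moreover have "(u - E) - (x - E) = bot" using diff_zero diff_mono ux by blast
  ultimately show ?thesis by simp
qed

lemma j_TT: "sup (x - E1) (x - E2) = x - inf E1 (E2::'a)"
proof (rule antisym)
  have "x - E1 \<le> x - inf E1 E2" by (rule diff_anti) simp
  moreover have "x - E2 \<le> x - inf E1 E2" by (rule diff_anti) simp
  ultimately show "sup (x - E1) (x - E2) \<le> x - inf E1 E2" by simp
  let ?D = "sup (x - E1) (x - E2)"
  have "x \<le> sup E1 ?D" using le_sup_diff[of x E1] by (meson order_trans sup.cobounded1 sup_mono order_refl)
  moreover have "x \<le> sup E2 ?D" using le_sup_diff[of x E2] by (meson order_trans sup.cobounded2 sup_mono order_refl)
  ultimately have "x \<le> sup (inf E1 E2) ?D" by (simp add: sup_inf_distrib2)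
  thus "x - inf E1 E2 \<le> ?D" using diff_le_iff by blast
qed
lemma j_TF: "sup (x - E1) (inf x E2) = x - (E1 - (E2::'a))"
proof (rule antisym)
  have "x - E1 \<le> x - (E1 - E2)" by (rule diff_anti) (rule diff_le)
  moreover have "inf x E2 \<le> x - (E1 - E2)" unfolding le_diff_iff
    using ax1' by (metis inf.cobounded1 inf_assoc inf_bot_r inf_commute)
  ultimately show "sup (x - E1) (inf x E2) \<le> x - (E1 - E2)" by simp
  have a: "x - E2 \<le> sup (E1 - E2) (x - E1)" unfolding diff_le_iff
  proof -
    have "sup E2 (sup (E1 - E2) (x - E1)) = sup (sup E2 E1) (x - E1)"
      using ax2[of E1 E2] by (metis sup_assoc sup_commute)
    moreover have "x \<le> sup (sup E2 E1) (x - E1)" using le_sup_diff[of x E1]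
      by (meson order_trans sup.cobounded2 sup_mono order_refl)
    ultimately show "x \<le> sup E2 (sup (E1 - E2) (x - E1))" by simp
  qed
  have "x = sup (inf x E2) (x - E2)" by (rule split)
  also have "\<dots> \<le> sup (E1 - E2) (sup (x - E1) (inf x E2))"
  proof (rule le_supI)
    have b: "sup (E1 - E2) (x - E1) \<le> sup (E1 - E2) (sup (x - E1) (inf x E2))"
      by (rule sup_mono) simp_all
    show "x - E2 \<le> sup (E1 - E2) (sup (x - E1) (inf x E2))" using a b by (rule order_trans)
    show "inf x E2 \<le> sup (E1 - E2) (sup (x - E1) (inf x E2))" by (simp add: le_supI2)
  qed
  finally show "x - (E1 - E2) \<le> sup (x - E1) (inf x E2)" using diff_le_iff by blast
qed
lemma m_TT: "inf (x - E1) (x - E2) = x - sup E1 (E2::'a)"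
  using inf_diff[of "x - E1" x E2] diff_le[of x E1] diff_sup
  by (simp add: inf.absorb1)
lemma m_TF: "inf (x - E1) (inf x E2) = inf x (E2 - (E1::'a))"
  using inf_diff[of "inf x E2" x E1] inf_diff[of x E2 E1]
  by (simp add: inf_commute inf_left_commute)
lemma m_FT: "inf (inf x E1) (x - E2) = inf x (E1 - (E2::'a))"
  using m_TF[of x E2 E1] by (simp add: inf_commute)
lemma d_TT: "(x - E1) - (x - E2) = inf x (E2 - (E1::'a))"
  using sub_diff[OF diff_le[of x E1], of E2] m_TF[of x E1 E2]
  by (simp add: inf_commute inf_left_commute inf_diff)
lemma d_FT: "(inf x E1) - (x - E2) = inf x (inf E1 (E2::'a))"
  using sub_diff[of "inf x E1" x E2] by (simp add: inf_assoc)
lemma d_TF: "(x - E1) - (inf x E2) = x - sup E1 (E2::'a)"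
proof -
  have "inf (x - E1) (inf x E2) = inf (x - E1) E2" using diff_le[of x E1]
    by (metis inf.absorb_iff1 inf_assoc)
  hence "(x - E1) - (inf x E2) = (x - E1) - E2"
    using diff_inf_self by metis
  thus ?thesis using diff_sup by simp
qed
lemma d_FF: "(inf x E1) - (inf x E2) = inf x (E1 - (E2::'a))"
proof -
  have "inf (inf x E1) (inf x E2) = inf (inf x E1) E2"
    by (simp add: inf_assoc inf_left_commute)
  hence "(inf x E1) - (inf x E2) = (inf x E1) - E2"
    using diff_inf_self by metis
  thus ?thesis using inf_diff by simp
qed
lemma d_B: "(B1 - x) - (B2 - x) = (B1 - B2) - (x::'a)"
proof -
  have "inf (B1 - x) (B2 - x) = inf (B1 - x) B2 - x" by (rule inf_diff)
  also have "\<dots> = inf (B1 - x) B2"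
    by (rule diff_disj) (metis ax1 inf.absorb_iff2 inf_assoc inf_commute inf_le1 inf_bot_r)
  finally have "(B1 - x) - (B2 - x) = (B1 - x) - B2"
    using diff_inf_self by metis
  thus ?thesis using diff_sup by (metis sup_commute)
qed
lemma m_B: "inf (B1 - x) (B2 - x) = inf B1 B2 - (x::'a)"
proof -
  have "inf (B1 - x) (B2 - x) = inf (B1 - x) B2 - x" by (rule inf_diff)
  also have "inf (B1 - x) B2 = inf B1 B2 - x" using inf_diff[of B2 B1 x] by (simp add: inf_commute)
  also have "(inf B1 B2 - x) - x = inf B1 B2 - x"
    by (rule diff_disj) (rule ax1)
  finally show ?thesis .
qed


lemma dec_x: "X \<le> x \<Longrightarrow> inf Y x = bot \<Longrightarrow> inf (sup X Y) (x::'a) = X"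
  by (simp add: inf_sup_distrib2 inf.absorb1)
lemma disj_le: "X \<le> x \<Longrightarrow> inf Y x = bot \<Longrightarrow> inf X Y = (bot::'a)"
proof -
  assume h: "X \<le> x" "inf Y x = bot"
  have "inf X Y \<le> inf Y x" using h(1) by (simp add: le_infI1 le_infI2 inf.coboundedI2)
  thus ?thesis using h(2) by (simp add: bot_unique)
qed
lemma dec_meet:
  assumes "X1 \<le> x" "X2 \<le> x" "inf Y1 x = bot" "inf Y2 (x::'a) = bot"
  shows "inf (sup X1 Y1) (sup X2 Y2) = sup (inf X1 X2) (inf Y1 Y2)"
proof -
  have a: "inf X1 Y2 = bot" using disj_le assms by blast
  have b: "inf Y1 X2 = bot" using disj_le[OF assms(2) assms(3)] by (simp add: inf_commute)
  show ?thesis using a b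
    by (simp add: inf_sup_distrib1 inf_sup_distrib2 sup_commute)
qed
lemma dec_diff:
  assumes "X1 \<le> x" "X2 \<le> x" "inf Y1 x = bot" "inf Y2 (x::'a) = bot"
  shows "(sup X1 Y1) - (sup X2 Y2) = sup (X1 - X2) (Y1 - Y2)"
proof -
  have "X1 - sup X2 Y2 = X1 - X2 - Y2" by (rule diff_sup)
  also have "\<dots> = X1 - X2"
  proof (rule diff_disj)
    have "X1 - X2 \<le> x" using diff_le assms(1) by (rule order_trans)
    thus "inf (X1 - X2) Y2 = bot" using disj_le assms(4) by blast
  qed
  finally have 1: "X1 - sup X2 Y2 = X1 - X2" .
  have "Y1 - sup X2 Y2 = Y1 - sup Y2 X2" by (simp add: sup_commute)
  also have "\<dots> = Y1 - Y2 - X2" by (rule diff_sup)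
  also have "\<dots> = Y1 - Y2"
  proof (rule diff_disj)
    have "inf (Y1 - Y2) x \<le> inf Y1 x" by (rule inf_mono[OF diff_le order_refl])
    hence "inf (Y1 - Y2) x = bot" using assms(3) by (simp add: bot_unique)
    hence "inf X2 (Y1 - Y2) = bot" by (rule disj_le[OF assms(2)])
    thus "inf (Y1 - Y2) X2 = bot" by (simp add: inf_commute)
  qed
  finally have 2: "Y1 - sup X2 Y2 = Y1 - Y2" .
  show ?thesis using 1 2 sup_diff by simp
qed

definition xp :: "bool \<Rightarrow> 'a \<Rightarrow> 'a \<Rightarrow> 'a" where
  "xp e E x = (if e then x - E else inf x E)"
definition nf :: "bool \<Rightarrow> 'a \<Rightarrow> 'a \<Rightarrow> 'a \<Rightarrow> 'a" where
  "nf e E B x = sup (xp e E x) (B - x)"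

lemma xp_le: "xp e E x \<le> x" unfolding xp_def using diff_le by auto
lemma Bx: "inf (B - x) x = (bot::'a)" by (rule ax1)

lemma nf_join: "sup (nf e1 E1 B1 x) (nf e2 E2 B2 x)
   = sup (sup (xp e1 E1 x) (xp e2 E2 x)) (sup B1 B2 - x)"
  unfolding nf_def sup_diff by (simp add: sup_assoc sup_left_commute)
lemma nf_meet: "inf (nf e1 E1 B1 x) (nf e2 E2 B2 x)
   = sup (inf (xp e1 E1 x) (xp e2 E2 x)) (inf B1 B2 - x)"
  unfolding nf_def m_B[symmetric] by (rule dec_meet[OF xp_le xp_le Bx Bx])
lemma nf_diff: "(nf e1 E1 B1 x) - (nf e2 E2 B2 x)
   = sup ((xp e1 E1 x) - (xp e2 E2 x)) ((B1 - B2) - x)"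
proof -
  have "(nf e1 E1 B1 x) - (nf e2 E2 B2 x) = sup ((xp e1 E1 x) - (xp e2 E2 x)) ((B1 - x) - (B2 - x))"
    unfolding nf_def by (rule dec_diff[OF xp_le xp_le Bx Bx])
  thus ?thesis by (simp only: d_B)
qed

lemma j_FT: "sup (inf x E1) (x - E2) = x - (E2 - (E1::'a))"
  using j_TF[of x E2 E1] by (simp add: sup_commute)
lemma m_FF: "inf (inf x E1) (inf x E2) = inf x (inf E1 (E2::'a))"
  by (simp add: inf_assoc inf_left_commute)
lemma j_FF: "sup (inf x E1) (inf x E2) = inf x (sup E1 (E2::'a))"
  by (simp add: inf_sup_distrib1)

lemma xp_join_eq: "sup (xp e1 E1 x) (xp e2 E2 x) = xp (e1 \<or> e2)
   (if e1 \<and> e2 then inf E1 E2 else if e1 then E1 - E2 else if e2 then E2 - E1 else sup E1 E2) x"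
  by (cases e1; cases e2) (simp_all only: xp_def j_TT j_TF j_FT j_FF if_True if_False simp_thms)
lemma xp_meet_eq: "inf (xp e1 E1 x) (xp e2 E2 x) = xp (e1 \<and> e2)
   (if e1 \<and> e2 then sup E1 E2 else if e1 then E2 - E1 else if e2 then E1 - E2 else inf E1 E2) x"
  by (cases e1; cases e2) (simp_all only: xp_def m_TT m_TF m_FT m_FF if_True if_False simp_thms)
lemma xp_diff_eq: "(xp e1 E1 x) - (xp e2 E2 x) = xp (e1 \<and> \<not> e2)
   (if e1 \<and> e2 then E2 - E1 else if e1 then sup E1 E2 else if e2 then inf E1 E2 else E1 - E2) x"
  by (cases e1; cases e2) (simp_all only: xp_def d_TT d_TF d_FT d_FF if_True if_False simp_thms)

lemma xp_join: "\<exists>e E. E \<in> {inf E1 E2, E1 - E2, E2 - E1, sup E1 E2} \<and> (\<forall>x.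
   sup (xp e1 E1 x) (xp e2 E2 x) = xp e E x)"
  by (rule exI, rule exI, rule conjI[OF _ allI[OF xp_join_eq]]) auto
lemma xp_meet: "\<exists>e E. E \<in> {sup E1 E2, E1 - E2, E2 - E1, inf E1 E2} \<and> (\<forall>x.
   inf (xp e1 E1 x) (xp e2 E2 x) = xp e E x)"
  by (rule exI, rule exI, rule conjI[OF _ allI[OF xp_meet_eq]]) auto
lemma xp_diff: "\<exists>e E. E \<in> {sup E1 E2, E1 - E2, E2 - E1, inf E1 E2} \<and> (\<forall>x.
   (xp e1 E1 x) - (xp e2 E2 x) = xp e E x)"
  by (rule exI, rule exI, rule conjI[OF _ allI[OF xp_diff_eq]]) auto

lemma nf_exists:
  assumes sub: "ershov_subalgebra C"
  shows "csts t \<subseteq> C \<Longrightarrow> \<exists>e E B. E \<in> C \<and> B \<in> C \<and>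
     (\<forall>v. (\<forall>i. i \<noteq> 0 \<longrightarrow> v i = bot) \<longrightarrow> eval v t = nf e E B (v 0))"
proof (induction t)
  case (Var i)
  have b: "bot \<in> C" using sub unfolding ershov_subalgebra_def by blast
  show ?case
  proof (cases "i = 0")
    case True
    show ?thesis using b True
      by (intro exI[of _ True] exI[of _ bot]) (simp add: nf_def xp_def)
  next
    case False
    show ?thesis using b False
      by (intro exI[of _ False] exI[of _ bot]) (simp add: nf_def xp_def)
  qed
next
  case (Cst c)
  have "c = sup (inf x c) (c - x)" for x using split[of c x] by (simp add: inf_commute)
  thus ?case using Cst
    by (intro exI[of _ False] exI[of _ c] exI[of _ c]) (simp add: nf_def xp_def)
next
  case Zero
  have b: "bot \<in> C" using sub unfolding ershov_subalgebra_def by blast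
  show ?case using b
    by (intro exI[of _ False] exI[of _ bot]) (simp add: nf_def xp_def)
next
  case (Join t s)
  have ct: "csts t \<subseteq> C" and cs: "csts s \<subseteq> C" using Join.prems by auto
  obtain e1 E1 B1 where h1: "E1 \<in> C" "B1 \<in> C"
    "\<forall>v. (\<forall>i. i \<noteq> 0 \<longrightarrow> v i = bot) \<longrightarrow> eval v t = nf e1 E1 B1 (v 0)"
    using Join.IH(1)[OF ct] by blast
  obtain e2 E2 B2 where h2: "E2 \<in> C" "B2 \<in> C"
    "\<forall>v. (\<forall>i. i \<noteq> 0 \<longrightarrow> v i = bot) \<longrightarrow> eval v s = nf e2 E2 B2 (v 0)"
    using Join.IH(2)[OF cs] by blast
  have cl: "sup a b \<in> C" "inf a b \<in> C" "a - b \<in> C" if "a \<in> C" "b \<in> C" for a b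
    using sub that unfolding ershov_subalgebra_def by auto
  have EC: "(if e1 \<and> e2 then inf E1 E2 else if e1 then E1 - E2 else if e2 then E2 - E1 else sup E1 E2) \<in> C" using cl h1(1) h2(1) by auto
  have BC: "sup B1 B2 \<in> C" using cl h1(2) h2(2) by auto
  have "\<forall>v. (\<forall>i. i \<noteq> 0 \<longrightarrow> v i = bot) \<longrightarrow> eval v (Join t s) = nf (e1 \<or> e2) (if e1 \<and> e2 then inf E1 E2 else if e1 then E1 - E2 else if e2 then E2 - E1 else sup E1 E2) (sup B1 B2) (v 0)"
  proof (intro allI impI)
    fix v :: "nat \<Rightarrow> 'a" assume hv: "\<forall>i. i \<noteq> 0 \<longrightarrow> v i = bot"
    have "eval v (Join t s) = sup (nf e1 E1 B1 (v 0)) (nf e2 E2 B2 (v 0))" using h1(3) h2(3) hv by simp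
    also have "\<dots> = nf (e1 \<or> e2) (if e1 \<and> e2 then inf E1 E2 else if e1 then E1 - E2 else if e2 then E2 - E1 else sup E1 E2) (sup B1 B2) (v 0)"
      unfolding nf_join xp_join_eq by (simp only: nf_def)
    finally show "eval v (Join t s) = nf (e1 \<or> e2) (if e1 \<and> e2 then inf E1 E2 else if e1 then E1 - E2 else if e2 then E2 - E1 else sup E1 E2) (sup B1 B2) (v 0)" .
  qed
  thus ?case using EC BC by blast
next
  case (Meet t s)
  have ct: "csts t \<subseteq> C" and cs: "csts s \<subseteq> C" using Meet.prems by auto
  obtain e1 E1 B1 where h1: "E1 \<in> C" "B1 \<in> C"
    "\<forall>v. (\<forall>i. i \<noteq> 0 \<longrightarrow> v i = bot) \<longrightarrow> eval v t = nf e1 E1 B1 (v 0)"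
    using Meet.IH(1)[OF ct] by blast
  obtain e2 E2 B2 where h2: "E2 \<in> C" "B2 \<in> C"
    "\<forall>v. (\<forall>i. i \<noteq> 0 \<longrightarrow> v i = bot) \<longrightarrow> eval v s = nf e2 E2 B2 (v 0)"
    using Meet.IH(2)[OF cs] by blast
  have cl: "sup a b \<in> C" "inf a b \<in> C" "a - b \<in> C" if "a \<in> C" "b \<in> C" for a b
    using sub that unfolding ershov_subalgebra_def by auto
  have EC: "(if e1 \<and> e2 then sup E1 E2 else if e1 then E2 - E1 else if e2 then E1 - E2 else inf E1 E2) \<in> C" using cl h1(1) h2(1) by auto
  have BC: "inf B1 B2 \<in> C" using cl h1(2) h2(2) by auto
  have "\<forall>v. (\<forall>i. i \<noteq> 0 \<longrightarrow> v i = bot) \<longrightarrow> eval v (Meet t s) = nf (e1 \<and> e2) (if e1 \<and> e2 then sup E1 E2 else if e1 then E2 - E1 else if e2 then E1 - E2 else inf E1 E2) (inf B1 B2) (v 0)"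
  proof (intro allI impI)
    fix v :: "nat \<Rightarrow> 'a" assume hv: "\<forall>i. i \<noteq> 0 \<longrightarrow> v i = bot"
    have "eval v (Meet t s) = inf (nf e1 E1 B1 (v 0)) (nf e2 E2 B2 (v 0))" using h1(3) h2(3) hv by simp
    also have "\<dots> = nf (e1 \<and> e2) (if e1 \<and> e2 then sup E1 E2 else if e1 then E2 - E1 else if e2 then E1 - E2 else inf E1 E2) (inf B1 B2) (v 0)"
      unfolding nf_meet xp_meet_eq by (simp only: nf_def)
    finally show "eval v (Meet t s) = nf (e1 \<and> e2) (if e1 \<and> e2 then sup E1 E2 else if e1 then E2 - E1 else if e2 then E1 - E2 else inf E1 E2) (inf B1 B2) (v 0)" .
  qed
  thus ?case using EC BC by blast
next
  case (Diff t s)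
  have ct: "csts t \<subseteq> C" and cs: "csts s \<subseteq> C" using Diff.prems by auto
  obtain e1 E1 B1 where h1: "E1 \<in> C" "B1 \<in> C"
    "\<forall>v. (\<forall>i. i \<noteq> 0 \<longrightarrow> v i = bot) \<longrightarrow> eval v t = nf e1 E1 B1 (v 0)"
    using Diff.IH(1)[OF ct] by blast
  obtain e2 E2 B2 where h2: "E2 \<in> C" "B2 \<in> C"
    "\<forall>v. (\<forall>i. i \<noteq> 0 \<longrightarrow> v i = bot) \<longrightarrow> eval v s = nf e2 E2 B2 (v 0)"
    using Diff.IH(2)[OF cs] by blast
  have cl: "sup a b \<in> C" "inf a b \<in> C" "a - b \<in> C" if "a \<in> C" "b \<in> C" for a b
    using sub that unfolding ershov_subalgebra_def by auto
  have EC: "(if e1 \<and> e2 then E2 - E1 else if e1 then sup E1 E2 else if e2 then inf E1 E2 else E1 - E2) \<in> C" using cl h1(1) h2(1) by auto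
  have BC: "B1 - B2 \<in> C" using cl h1(2) h2(2) by auto
  have "\<forall>v. (\<forall>i. i \<noteq> 0 \<longrightarrow> v i = bot) \<longrightarrow> eval v (Diff t s) = nf (e1 \<and> \<not> e2) (if e1 \<and> e2 then E2 - E1 else if e1 then sup E1 E2 else if e2 then inf E1 E2 else E1 - E2) (B1 - B2) (v 0)"
  proof (intro allI impI)
    fix v :: "nat \<Rightarrow> 'a" assume hv: "\<forall>i. i \<noteq> 0 \<longrightarrow> v i = bot"
    have "eval v (Diff t s) = (nf e1 E1 B1 (v 0)) - (nf e2 E2 B2 (v 0))" using h1(3) h2(3) hv by simp
    also have "\<dots> = nf (e1 \<and> \<not> e2) (if e1 \<and> e2 then E2 - E1 else if e1 then sup E1 E2 else if e2 then inf E1 E2 else E1 - E2) (B1 - B2) (v 0)"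
      unfolding nf_diff xp_diff_eq by (simp only: nf_def)
    finally show "eval v (Diff t s) = nf (e1 \<and> \<not> e2) (if e1 \<and> e2 then E2 - E1 else if e1 then sup E1 E2 else if e2 then inf E1 E2 else E1 - E2) (B1 - B2) (v 0)" .
  qed
  thus ?case using EC BC by blast
qed

lemma inf_sup_bot: "inf x (sup a b) = bot \<longleftrightarrow> inf x a = bot \<and> inf (x::'a) b = bot"
  by (metis bot_unique inf_sup_distrib1 sup.cobounded1 sup.cobounded2 sup_bot_l)
lemma eq_FF: "inf x E1 = inf x E2 \<longleftrightarrow> inf x (sup (E1 - E2) (E2 - E1)) = (bot::'a)"
proof -
  have k: "inf x E1 \<le> inf x E2 \<longleftrightarrow> inf x (E1 - E2) = bot" for E1 E2
  proof
    assume "inf x E1 \<le> inf x E2"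
    hence "inf x E1 - E2 = bot" using diff_zero by (meson inf.boundedE)
    thus "inf x (E1 - E2) = bot" using inf_diff by simp
  next
    assume "inf x (E1 - E2) = bot"
    hence "inf x E1 - E2 = bot" using inf_diff by simp
    hence "inf x E1 \<le> E2" using diff_le_iff[of "inf x E1" E2 bot] by simp
    thus "inf x E1 \<le> inf x E2" by simp
  qed
  have k1: "inf x E1 \<le> inf x E2 \<longleftrightarrow> inf x (E1 - E2) = bot" by (rule k)
  have k2: "inf x E2 \<le> inf x E1 \<longleftrightarrow> inf x (E2 - E1) = bot" by (rule k)
  show ?thesis unfolding inf_sup_bot by (metis k1 k2 antisym order_refl)
qed
lemma eq_TT: "x - E1 = x - E2 \<longleftrightarrow> inf x E1 = inf (x::'a) E2"
proof
  assume "x - E1 = x - E2"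
  thus "inf x E1 = inf x E2" using d_TT[of x bot E1] d_TT[of x bot E2] by simp
next
  assume "inf x E1 = inf x E2"
  thus "x - E1 = x - E2" using diff_inf_self by metis
qed
lemma eq_TF: "x - E1 = inf x E2 \<longleftrightarrow> inf x (inf E1 E2) = bot \<and> x \<le> sup E1 (E2::'a)"
proof
  assume h: "x - E1 = inf x E2"
  have "inf x (inf E1 E2) = inf (inf x E2) E1" by (simp add: inf_commute inf_left_commute)
  also have "\<dots> = bot" using h[symmetric] ax1 by simp
  finally have 1: "inf x (inf E1 E2) = bot" .
  have "x \<le> sup E1 (inf x E2)" using le_sup_diff[of x E1] h by simp
  also have "\<dots> \<le> sup E1 E2" by (simp add: le_supI2)
  finally show "inf x (inf E1 E2) = bot \<and> x \<le> sup E1 E2" using 1 by simp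
next
  assume h: "inf x (inf E1 E2) = bot \<and> x \<le> sup E1 E2"
  have "x - E1 \<le> E2" using h diff_le_iff by blast
  hence 1: "x - E1 \<le> inf x E2" using diff_le by simp
  have "inf (inf x E2) E1 = bot" using h by (simp add: inf_commute inf_left_commute)
  hence "inf x E2 \<le> x - E1" using le_diff_iff by simp
  thus "x - E1 = inf x E2" using 1 by simp
qed
lemma nf_bot: "nf e E B bot = B" unfolding nf_def xp_def by simp
lemma nf_eq: "nf e1 E1 B x = nf e2 E2 B x \<longleftrightarrow> xp e1 E1 x = xp e2 E2 x"
  unfolding nf_def using dec_x[OF xp_le Bx] by metis

lemma xp_eq:
  assumes sub: "ershov_subalgebra C" and "E1 \<in> C" "E2 \<in> C"
  shows "\<exists>P R. P \<in> C \<and> R \<subseteq> C \<and> finite R \<and>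
     (\<forall>x. xp e1 E1 x = xp e2 E2 x \<longleftrightarrow> inf x P = bot \<and> (\<forall>r\<in>R. x \<le> r))"
proof -
  have cl: "sup a b \<in> C" "inf a b \<in> C" "a - b \<in> C" if "a \<in> C" "b \<in> C" for a b
    using sub that unfolding ershov_subalgebra_def by auto
  have d: "sup (E1 - E2) (E2 - E1) \<in> C"
    by (rule cl(1)[OF cl(3)[OF assms(2) assms(3)] cl(3)[OF assms(3) assms(2)]])
  let ?D = "sup (E1 - E2) (E2 - E1)"
  have TT: "\<forall>x. xp True E1 x = xp True E2 x \<longleftrightarrow> inf x ?D = bot \<and> (\<forall>r\<in>{}. x \<le> r)"
    by (simp only: xp_def if_True eq_TT eq_FF ball_empty simp_thms; simp)
  have FF: "\<forall>x. xp False E1 x = xp False E2 x \<longleftrightarrow> inf x ?D = bot \<and> (\<forall>r\<in>{}. x \<le> r)"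
    by (simp only: xp_def if_False eq_FF ball_empty simp_thms; simp)
  have TF: "\<forall>x. xp True E1 x = xp False E2 x \<longleftrightarrow> inf x (inf E1 E2) = bot \<and> (\<forall>r\<in>{sup E1 E2}. x \<le> r)"
    by (simp only: xp_def if_True if_False eq_TF ball_simps simp_thms; simp)
  have FT: "\<forall>x. xp False E1 x = xp True E2 x \<longleftrightarrow> inf x (inf E2 E1) = bot \<and> (\<forall>r\<in>{sup E2 E1}. x \<le> r)"
    using eq_TF[of _ E2 E1] by (simp only: xp_def if_True if_False eq_commute[of "inf _ E1"] ball_simps simp_thms; simp)
  have c1: "inf E1 E2 \<in> C" "inf E2 E1 \<in> C" "sup E1 E2 \<in> C" "sup E2 E1 \<in> C"
    using cl(1,2)[OF assms(2) assms(3)] cl(1,2)[OF assms(3) assms(2)] by simp_all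
  show ?thesis
  proof (cases e1)
    case True
    show ?thesis
    proof (cases e2)
      case True
      show ?thesis using TT d \<open>e1\<close> True
        by (intro exI[of _ ?D] exI[of _ "{}"]) simp
    next
      case False
      show ?thesis using TF c1 \<open>e1\<close> False
        by (intro exI[of _ "inf E1 E2"] exI[of _ "{sup E1 E2}"]) simp
    qed
  next
    case False
    show ?thesis
    proof (cases e2)
      case True
      show ?thesis using FT c1 \<open>\<not>e1\<close> True
        by (intro exI[of _ "inf E2 E1"] exI[of _ "{sup E2 E1}"]) simp
    next
      case False
      show ?thesis using FF d \<open>\<not>e1\<close> False
        by (intro exI[of _ ?D] exI[of _ "{}"]) simp
    qed
  qed
qed

lemma eqn_constr:
  assumes sub: "ershov_subalgebra C" and cs: "csts t \<union> csts s \<subseteq> C"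
    and z: "eval (\<lambda>_. bot) t = (eval (\<lambda>_. bot) s :: 'a)"
  shows "\<exists>P R. P \<in> C \<and> R \<subseteq> C \<and> finite R \<and> (\<forall>v. (\<forall>i. i \<noteq> 0 \<longrightarrow> v i = bot) \<longrightarrow>
     (eval v t = eval v s \<longleftrightarrow> inf (v 0) P = bot \<and> (\<forall>r\<in>R. v 0 \<le> r)))"
proof -
  obtain e1 E1 B1 where 1: "E1 \<in> C" "B1 \<in> C"
    "\<forall>v. (\<forall>i. i \<noteq> 0 \<longrightarrow> v i = bot) \<longrightarrow> eval v t = nf e1 E1 B1 (v 0)"
    using nf_exists[OF sub, of t] cs by auto
  obtain e2 E2 B2 where 2: "E2 \<in> C" "B2 \<in> C"
    "\<forall>v. (\<forall>i. i \<noteq> 0 \<longrightarrow> v i = bot) \<longrightarrow> eval v s = nf e2 E2 B2 (v 0)"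
    using nf_exists[OF sub, of s] cs by auto
  have "B1 = B2" using 1(3) 2(3) z nf_bot by (metis (no_types, lifting))
  obtain P R where PR: "P \<in> C" "R \<subseteq> C" "finite R"
    "\<forall>x. xp e1 E1 x = xp e2 E2 x \<longleftrightarrow> inf x P = bot \<and> (\<forall>r\<in>R. x \<le> r)"
    using xp_eq[OF sub 1(1) 2(1)] by blast
  show ?thesis using PR 1(3) 2(3) \<open>B1 = B2\<close> nf_eq by (intro exI[of _ P] exI[of _ R]) auto
qed

lemma sys_constr:
  assumes sub: "ershov_subalgebra C"
  shows "finite S \<Longrightarrow> (\<forall>(t,s)\<in>S. csts t \<union> csts s \<subseteq> C \<and> eval (\<lambda>_. bot) t = (eval (\<lambda>_. bot) s :: 'a))
   \<Longrightarrow> \<exists>P R. P \<in> C \<and> R \<subseteq> C \<and> finite R \<and> (\<forall>v. (\<forall>i. i \<noteq> 0 \<longrightarrow> v i = bot) \<longrightarrow>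
     ((\<forall>(t,s)\<in>S. eval v t = eval v s) \<longleftrightarrow> inf (v 0) P = bot \<and> (\<forall>r\<in>R. v 0 \<le> r)))"
proof (induction S rule: finite_induct)
  case empty
  have "bot \<in> C" using sub unfolding ershov_subalgebra_def by blast
  thus ?case by (intro exI[of _ bot] exI[of _ "{}"]) simp
next
  case (insert q S)
  obtain t s where q: "q = (t, s)" by fastforce
  obtain P1 R1 where 1: "P1 \<in> C" "R1 \<subseteq> C" "finite R1" "\<forall>v. (\<forall>i. i \<noteq> 0 \<longrightarrow> v i = bot) \<longrightarrow>
     (eval v t = eval v s \<longleftrightarrow> inf (v 0) P1 = bot \<and> (\<forall>r\<in>R1. v 0 \<le> r))"
    using eqn_constr[OF sub, of t s] insert.prems q by auto
  obtain P2 R2 where 2: "P2 \<in> C" "R2 \<subseteq> C" "finite R2" "\<forall>v. (\<forall>i. i \<noteq> 0 \<longrightarrow> v i = bot) \<longrightarrow>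
     ((\<forall>(t,s)\<in>S. eval v t = eval v s) \<longleftrightarrow> inf (v 0) P2 = bot \<and> (\<forall>r\<in>R2. v 0 \<le> r))"
    using insert by auto
  have "sup P1 P2 \<in> C" using 1 2 sub unfolding ershov_subalgebra_def by blast
  thus ?case using 1 2 q inf_sup_bot
    by (intro exI[of _ "sup P1 P2"] exI[of _ "R1 \<union> R2"]) auto
qed

lemma meet_fin:
  assumes sub: "ershov_subalgebra C"
  shows "finite R \<Longrightarrow> R \<noteq> {} \<Longrightarrow> R \<subseteq> C \<Longrightarrow> \<exists>m\<in>C. \<forall>x. x \<le> m \<longleftrightarrow> (\<forall>r\<in>R. x \<le> (r::'a))"
proof (induction R rule: finite_ne_induct)
  case (singleton r) thus ?case by auto
next
  case (insert r R)
  then obtain m where "m \<in> C" "\<forall>x. x \<le> m \<longleftrightarrow> (\<forall>r\<in>R. x \<le> r)" by auto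
  moreover have "inf r m \<in> C" using insert.prems \<open>m \<in> C\<close> sub
    unfolding ershov_subalgebra_def by auto
  ultimately show ?case by (intro bexI[of _ "inf r m"]) auto
qed

end

theorem mainTheorem6:
  fixes C :: "'a::{distrib_lattice, order_bot, minus} set"
    and K :: "'a set"
  assumes "ershov_algebra TYPE('a)"
    and "ershov_subalgebra C"
    and "weakly_eq_noetherian C"
    and "K \<subseteq> C"
    and "upper_unbounded K"
  shows "\<exists>c\<in>C. equivalent 1 {(Meet (Var 0) (Cst cj), Zero) | cj. cj \<in> K}
                          {(Join (Var 0) (Cst c), Cst c)}"
proof -
  interpret ershov "TYPE('a)"
    using assms(1) unfolding ershov_algebra_def by unfold_locales auto
  define T where "T = {(Meet (Var 0) (Cst cj), Zero :: 'a trm) | cj. cj \<in> K}"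
  have Tin: "system_in C 1 T" using assms(4) unfolding T_def system_in_def by auto
  obtain S0 where S0: "finite S0" "system_in C 1 S0" "equivalent 1 T S0"
    using assms(3) Tin unfolding weakly_eq_noetherian_def by blast
  have one: "(\<forall>i\<ge>(1::nat). v i = bot) \<longleftrightarrow> (\<forall>i. i \<noteq> 0 \<longrightarrow> v i = bot)" for v :: "nat \<Rightarrow> 'a"
    by (metis less_one linorder_not_less)
  have zT: "(\<lambda>_. bot) \<in> sols 1 T" unfolding sols_def T_def by auto
  hence "(\<lambda>_. bot) \<in> sols 1 S0" using S0(3) unfolding equivalent_def by simp
  hence "\<forall>(t,s)\<in>S0. csts t \<union> csts s \<subseteq> C \<and> eval (\<lambda>_. bot) t = (eval (\<lambda>_. bot) s :: 'a)"
    using S0(2) unfolding sols_def system_in_def by auto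
  then obtain P R where PR: "P \<in> C" "R \<subseteq> C" "finite R" "\<forall>v. (\<forall>i. i \<noteq> 0 \<longrightarrow> v i = bot) \<longrightarrow>
     ((\<forall>(t,s)\<in>S0. eval v t = eval v s) \<longleftrightarrow> inf (v 0) P = bot \<and> (\<forall>r\<in>R. v 0 \<le> r))"
    using sys_constr[OF assms(2) S0(1)] by blast
  define va where "va x = (\<lambda>i::nat. if i = 0 then x else (bot::'a))" for x
  have key: "(\<forall>cj\<in>K. inf x cj = bot) \<longleftrightarrow> inf x P = bot \<and> (\<forall>r\<in>R. x \<le> r)" for x
  proof -
    have "va x \<in> sols 1 T \<longleftrightarrow> (\<forall>cj\<in>K. inf x cj = bot)"
      unfolding sols_def T_def va_def by force
    moreover have "va x \<in> sols 1 S0 \<longleftrightarrow> inf x P = bot \<and> (\<forall>r\<in>R. x \<le> r)"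
      using PR(4)[rule_format, of "va x"] unfolding sols_def va_def by auto
    ultimately show ?thesis using S0(3) unfolding equivalent_def by simp
  qed
  have "R \<noteq> {}"
  proof
    assume "R = {}"
    have "cj \<le> P" if "cj \<in> K" for cj
    proof -
      have "inf (cj - P) P = bot" by (rule ax1)
      hence "\<forall>c'\<in>K. inf (cj - P) c' = bot" using key \<open>R = {}\<close> by simp
      hence "inf (cj - P) cj = bot" using that by simp
      hence "cj - P = bot" using diff_le by (simp add: inf.absorb1)
      thus "cj \<le> P" using diff_le_iff[of cj P bot] by simp
    qed
    thus False using assms(5) unfolding upper_unbounded_def by blast
  qed
  then obtain m where m: "m \<in> C" "\<forall>x. x \<le> m \<longleftrightarrow> (\<forall>r\<in>R. x \<le> r)"
    using meet_fin[OF assms(2) PR(3)] PR(2) by blast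
  have cC: "m - P \<in> C" using m PR(1) assms(2) unfolding ershov_subalgebra_def by blast
  have "sols 1 T = sols 1 {(Join (Var 0) (Cst (m - P)), Cst (m - P))}"
  proof (rule set_eqI)
    fix v :: "nat \<Rightarrow> 'a"
    show "v \<in> sols 1 T \<longleftrightarrow> v \<in> sols 1 {(Join (Var 0) (Cst (m - P)), Cst (m - P))}"
    proof -
      have "v \<in> sols 1 T \<longleftrightarrow> (\<forall>i\<ge>1. v i = bot) \<and> (\<forall>cj\<in>K. inf (v 0) cj = bot)"
        unfolding sols_def T_def by force
      also have "\<dots> \<longleftrightarrow> (\<forall>i\<ge>1. v i = bot) \<and> v 0 \<le> m - P"
        using key m le_diff_iff by auto
      also have "\<dots> \<longleftrightarrow> v \<in> sols 1 {(Join (Var 0) (Cst (m - P)), Cst (m - P))}"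
        unfolding sols_def by (auto simp: sup.absorb2 sup.absorb_iff2)
      finally show ?thesis .
    qed
  qed
  thus ?thesis using cC unfolding T_def equivalent_def by blast
qed
end
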